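(* Let $L$ be an even positive integer and $N\ge 1$ an integer. Consider the logarithmic Bethe equations $$\frac{1}{\pi}\arctan \lambda_k=\frac{I_k}{L}-\frac{1}{\pi L}\sum_{l=1}^N \arctan(\lambda_k-\lambda_l),\qquad k=1,\dots,N,$$ for unknowns $\lambda_1,\dots,\lambda_N$, where the Bethe numbers $I_k$ are integers if $N$ is odd and half-integers if $N$ is even. Then the solutions $(\lambda_1,\dots,\lambda_N)$ of these equations with $\lambda_k\neq\lambda_l$ for $k\neq l$ are all real, and they are characterized (in one-to-one correspondence) by the choice of $N$ distinct (half-)integers $I_1,\dots,I_N$ satisfying $$-\frac{L+N-1}{2}< I_k < \frac{L+N-1}{2}.$$
   Context: These are the logarithmic form of the Bethe equations $\left(\frac{\lambda_k-i}{\lambda_k+i}\right)^L=\prod_{l\neq k}\frac{\lambda_k-\lambda_l+i}{\lambda_k-\lambda_l-i}$ of the non-compact spin $s=-1$ Heisenberg chain; $\arctan$ denotes the principal branch. *)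

theory Defs
  imports "HOL-Analysis.Analysis"
begin

definition bethe_number_ok :: "nat \<Rightarrow> real \<Rightarrow> bool" where
  "bethe_number_ok N x \<longleftrightarrow> (if odd N then x \<in> \<int> else x - 1/2 \<in> \<int>)"

text \<open>Points where the principal complex arctan is defined (it is singular at +-i).\<close>
definition arctan_admissible :: "nat \<Rightarrow> (nat \<Rightarrow> complex) \<Rightarrow> bool" where
  "arctan_admissible N lam \<longleftrightarrow>
     (\<forall>k<N. lam k \<noteq> \<i> \<and> lam k \<noteq> - \<i> \<and>
        (\<forall>l<N. lam k - lam l \<noteq> \<i> \<and> lam k - lam l \<noteq> - \<i>))"

definition log_bethe :: "nat \<Rightarrow> nat \<Rightarrow> (nat \<Rightarrow> complex) \<Rightarrow> (nat \<Rightarrow> real) \<Rightarrow> bool" where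
  "log_bethe L N lam I \<longleftrightarrow>
     (\<forall>k<N. Arctan (lam k) / complex_of_real pi =
        complex_of_real (I k / real L)
        - (\<Sum>l<N. Arctan (lam k - lam l)) / complex_of_real (pi * real L))"

end

theory Submission
  imports Defs
begin

definition GG :: "nat \<Rightarrow> nat \<Rightarrow> (nat \<Rightarrow> real) \<Rightarrow> nat \<Rightarrow> real" where
  "GG L N x k = real L * arctan (x k) + (\<Sum>l<N. arctan (x k - x l))"

lemma arctan_diff_le:
  fixes a b :: real assumes "a \<le> b" shows "arctan b - arctan a \<le> b - a"
proof (cases "a = b")
  case False
  then have ab: "a < b" using assms by simp
  from MVT2[OF ab, of arctan "\<lambda>x. inverse (1 + x\<^sup>2)"]
  obtain z where z: "arctan b - arctan a = (b - a) * inverse (1 + z\<^sup>2)"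
    using DERIV_arctan by blast
  have i1: "inverse (1 + z\<^sup>2) \<le> 1"
    by (simp add: inverse_le_1_iff)
  have i0: "inverse (1 + z\<^sup>2) \<ge> 0" by (simp add: add_nonneg_nonneg)
  have "(b - a) * inverse (1 + z\<^sup>2) \<le> (b - a) * 1"
    using i1 ab by (intro mult_left_mono) auto
  then show ?thesis using z by simp
qed simp

lemma G_lip:
  assumes "\<forall>l<N. x l \<le> y l" "k < N"
  shows "GG L N y k - GG L N x k \<le> (real L + real N) * (y k - x k)"
proof -
  have xk: "x k \<le> y k" using assms by auto
  have t1: "arctan (y k) - arctan (x k) \<le> y k - x k" by (rule arctan_diff_le[OF xk])
  have t2: "arctan (y k - y l) - arctan (x k - x l) \<le> y k - x k" if "l \<in> {..<N}" for l
  proof -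
    have "x l \<le> y l" using assms that by auto
    then have "arctan (y k - y l) \<le> arctan (y k - x l)" by (simp add: arctan_le_iff)
    moreover have "arctan (y k - x l) - arctan (x k - x l) \<le> (y k - x l) - (x k - x l)"
      using xk by (intro arctan_diff_le) simp
    ultimately show ?thesis by simp
  qed
  have "(\<Sum>l<N. arctan (y k - y l)) - (\<Sum>l<N. arctan (x k - x l))
        = (\<Sum>l<N. arctan (y k - y l) - arctan (x k - x l))" by (simp add: sum_subtractf)
  also have "\<dots> \<le> (\<Sum>l<N. y k - x k)" by (rule sum_mono) (use t2 in auto)
  also have "\<dots> = real N * (y k - x k)" by simp
  finally have s: "(\<Sum>l<N. arctan (y k - y l)) - (\<Sum>l<N. arctan (x k - x l)) \<le> real N * (y k - x k)" .
  have "real L * (arctan (y k) - arctan (x k)) \<le> real L * (y k - x k)"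
    using t1 by (simp add: mult_left_mono)
  then show ?thesis using s by (simp add: GG_def algebra_simps)
qed

lemma G_anti:
  assumes "\<forall>l<N. x l \<le> y l" "x k = y k"
  shows "GG L N y k \<le> GG L N x k"
proof -
  have "(\<Sum>l<N. arctan (y k - y l)) \<le> (\<Sum>l<N. arctan (x k - x l))"
    using assms by (intro sum_mono) (simp add: arctan_le_iff)
  then show ?thesis using assms by (simp add: GG_def)
qed

lemma G_strict:
  assumes "L > 0" "x k < x j"
  shows "GG L N x k < GG L N x j"
proof -
  have "real L * arctan (x k) < real L * arctan (x j)" using assms by (simp add: arctan_less_iff)
  moreover have "(\<Sum>l<N. arctan (x k - x l)) \<le> (\<Sum>l<N. arctan (x j - x l))"
    using assms by (intro sum_mono) (simp add: arctan_le_iff)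
  ultimately show ?thesis by (simp add: GG_def)
qed

lemma G_neg: "GG L N (\<lambda>k. - x k) k = - GG L N x k"
proof -
  have "arctan (- x k - - x l) = - arctan (x k - x l)" for l
  proof -
    have "- x k - - x l = - (x k - x l)" by simp
    then show ?thesis by (simp only: arctan_minus)
  qed
  then show ?thesis by (simp add: GG_def arctan_minus sum_negf)
qed

lemma G_bound:
  assumes "k < N"
  shows "\<bar>GG L N x k\<bar> \<le> real L * \<bar>arctan (x k)\<bar> + (real N - 1) * (pi / 2)"
proof -
  have fin: "finite ({..<N} - {k})" by simp
  have split: "(\<Sum>l<N. arctan (x k - x l)) = arctan (x k - x k) + (\<Sum>l\<in>{..<N} - {k}. arctan (x k - x l))"
    using assms by (subst sum.remove[of _ k]) auto
  have c: "card ({..<N} - {k}) = N - 1" using assms by simp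
  have "\<bar>\<Sum>l\<in>{..<N} - {k}. arctan (x k - x l)\<bar> \<le> (\<Sum>l\<in>{..<N} - {k}. \<bar>arctan (x k - x l)\<bar>)"
    by (rule sum_abs)
  also have "\<dots> \<le> of_nat (card ({..<N} - {k})) * (pi / 2)"
  proof (rule sum_bounded_above)
    fix l
    have "- (pi/2) < arctan (x k - x l)" "arctan (x k - x l) < pi/2"
      by (rule arctan_lbound, rule arctan_ubound)
    then show "\<bar>arctan (x k - x l)\<bar> \<le> pi / 2" unfolding abs_le_iff by linarith
  qed
  also have "\<dots> = (real N - 1) * (pi / 2)" using c assms by (simp add: of_nat_diff)
  finally have s: "\<bar>\<Sum>l<N. arctan (x k - x l)\<bar> \<le> (real N - 1) * (pi / 2)" using split by simp
  have "\<bar>GG L N x k\<bar> \<le> \<bar>real L * arctan (x k)\<bar> + \<bar>\<Sum>l<N. arctan (x k - x l)\<bar>"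
    unfolding GG_def by (rule abs_triangle_ineq)
  also have "\<bar>real L * arctan (x k)\<bar> = real L * \<bar>arctan (x k)\<bar>" by (simp add: abs_mult)
  finally show ?thesis using s by simp
qed

lemma G_uniq_le:
  assumes L0: "L > 0" and eq: "\<forall>k<N. GG L N x k = GG L N y k"
  shows "\<forall>k<N. x k \<le> y k"
proof (rule ccontr)
  assume "\<not> (\<forall>k<N. x k \<le> y k)"
  then obtain k0 where k0: "k0 < N" "x k0 > y k0" by auto
  define d where "d = Max ((\<lambda>k. x k - y k) ` {..<N})"
  have ne: "(\<lambda>k. x k - y k) ` {..<N} \<noteq> {}" using k0 by auto
  have "d \<in> (\<lambda>k. x k - y k) ` {..<N}" unfolding d_def by (rule Max_in) (use ne in auto)
  then obtain k where k: "k < N" "x k - y k = d" by auto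
  have dge: "x l - y l \<le> d" if "l < N" for l unfolding d_def by (rule Max_ge) (use that in auto)
  have "d > 0" using dge[OF k0(1)] k0 by simp
  then have "real L * arctan (y k) < real L * arctan (x k)" using k L0 by (simp add: arctan_less_iff)
  moreover have "(\<Sum>l<N. arctan (y k - y l)) \<le> (\<Sum>l<N. arctan (x k - x l))"
  proof (rule sum_mono)
    fix l assume "l \<in> {..<N}"
    then have "x l - y l \<le> x k - y k" using dge k by auto
    then show "arctan (y k - y l) \<le> arctan (x k - x l)" by (simp add: arctan_le_iff)
  qed
  ultimately have "GG L N y k < GG L N x k" by (simp add: GG_def)
  with eq k show False by simp
qed

lemma G_cong: "\<forall>l<N. x l = y l \<Longrightarrow> k < N \<Longrightarrow> GG L N x k = GG L N y k"
  unfolding GG_def by (auto intro!: sum.cong)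

lemma G_exists:
  fixes lp lm c :: "nat \<Rightarrow> real"
  assumes L0: "L > 0" and lmlp: "\<forall>k<N. lm k \<le> lp k"
    and sub: "\<forall>k<N. GG L N lm k \<le> c k" and sup: "\<forall>k<N. c k \<le> GG L N lp k"
  shows "\<exists>x. (\<forall>k\<ge>N. x k = 0) \<and> (\<forall>k<N. GG L N x k = c k)"
proof -
  have LN: "real L + real N > 0" using L0 by simp
  define S where "S = {x. (\<forall>k\<ge>N. x k = 0) \<and> (\<forall>k<N. x k \<le> lp k \<and> GG L N x k \<le> c k)}"
  define lm' where "lm' = (\<lambda>k. if k < N then lm k else 0)"
  have "GG L N lm' k = GG L N lm k" if "k < N" for k
    by (rule G_cong) (use that in \<open>auto simp: lm'_def\<close>)
  then have "lm' \<in> S" using lmlp sub by (auto simp: S_def lm'_def)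
  then have Sne: "\<And>k. (\<lambda>x. x k) ` S \<noteq> {}" by auto
  define mu where "mu = (\<lambda>k. if k < N then Sup ((\<lambda>x. x k) ` S) else 0)"
  have bdd: "bdd_above ((\<lambda>x. x k) ` S)" if "k < N" for k
    unfolding bdd_above_def S_def using that by auto
  have upper: "x k \<le> mu k" if "x \<in> S" "k < N" for x k
    unfolding mu_def using that by (auto intro!: cSup_upper bdd)
  have mu_lp: "mu k \<le> lp k" if "k < N" for k
    unfolding mu_def using that Sne by (auto intro!: cSup_least simp: S_def)
  have le_mu: "\<forall>l<N. x l \<le> mu l" if "x \<in> S" for x using upper that by auto
  have C1: "GG L N mu k \<le> c k" if k: "k < N" for k
  proof (rule ccontr)
    assume "\<not> GG L N mu k \<le> c k"
    then have gt: "GG L N mu k > c k" by simp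
    define e where "e = (GG L N mu k - c k) / (real L + real N)"
    have e0: "e > 0" using gt LN by (simp add: e_def)
    have "mu k - e < Sup ((\<lambda>x. x k) ` S)" using k e0 by (simp add: mu_def)
    then obtain x where x: "x \<in> S" "mu k - e < x k"
      using less_cSup_iff[OF Sne bdd[OF k]] by auto
    have "GG L N mu k - GG L N x k \<le> (real L + real N) * (mu k - x k)"
      by (rule G_lip[OF le_mu[OF x(1)] k])
    also have "\<dots> < (real L + real N) * e" using x LN by (intro mult_strict_left_mono) auto
    also have "\<dots> = GG L N mu k - c k" using LN by (simp add: e_def)
    finally have "GG L N x k > c k" by simp
    with x k show False by (auto simp: S_def)
  qed
  have C2: "c k \<le> GG L N mu k" if k: "k < N" for k
  proof (rule ccontr)
    assume "\<not> c k \<le> GG L N mu k"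
    then have lt: "GG L N mu k < c k" by simp
    have mlt: "mu k < lp k"
    proof (rule ccontr)
      assume "\<not> mu k < lp k"
      then have "mu k = lp k" using mu_lp[OF k] by simp
      then have "GG L N lp k \<le> GG L N mu k" using mu_lp by (intro G_anti) auto
      with lt sup k show False by force
    qed
    define d where "d = min (lp k - mu k) ((c k - GG L N mu k) / (real L + real N))"
    have d0: "d > 0" using mlt lt LN by (simp add: d_def)
    have d1: "mu k + d \<le> lp k" by (simp add: d_def)
    have d2: "(real L + real N) * d \<le> c k - GG L N mu k"
    proof -
      have "d \<le> (c k - GG L N mu k) / (real L + real N)" by (simp add: d_def)
      then have "(real L + real N) * d \<le> (real L + real N) * ((c k - GG L N mu k) / (real L + real N))"
        using LN by (intro mult_left_mono) auto
      then show ?thesis using LN by simp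
    qed
    define y where "y = mu(k := mu k + d)"
    have muy: "\<forall>l<N. mu l \<le> y l" using d0 by (simp add: y_def)
    have "y \<in> S"
      unfolding S_def
    proof (intro CollectI conjI allI impI)
      fix j assume "N \<le> j" then show "y j = 0" using k by (simp add: y_def mu_def)
    next
      fix j assume j: "j < N"
      show "y j \<le> lp j" using d1 mu_lp[OF j] by (simp add: y_def)
      show "GG L N y j \<le> c j"
      proof (cases "j = k")
        case True
        have "GG L N y k - GG L N mu k \<le> (real L + real N) * (y k - mu k)"
          by (rule G_lip[OF muy k])
        also have "y k - mu k = d" by (simp add: y_def)
        finally show ?thesis using d2 True by simp
      next
        case False
        have "GG L N y j \<le> GG L N mu j" using muy False by (intro G_anti) (auto simp: y_def)
        then show ?thesis using C1[OF j] by simp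
      qed
    qed
    then have "y k \<le> mu k" using upper k by blast
    then show False using d0 by (simp add: y_def)
  qed
  show ?thesis
    by (rule exI[of _ mu]) (use C1 C2 in \<open>auto simp: mu_def intro: antisym\<close>)
qed

lemma Im_Arctan_sign:
  fixes z :: complex assumes "z \<noteq> \<i>" "z \<noteq> - \<i>"
  shows "Im (Arctan z) > 0 \<longleftrightarrow> Im z > 0" and "Im (Arctan z) < 0 \<longleftrightarrow> Im z < 0"
proof -
  have n1: "1 + \<i> * z \<noteq> 0"
  proof
    assume h: "1 + \<i> * z = 0" then have "z = \<i>" by (auto simp: complex_eq_iff)
    with assms show False by simp
  qed
  have n2: "1 - \<i> * z \<noteq> 0"
  proof
    assume h: "1 - \<i> * z = 0" then have "z = - \<i>" by (auto simp: complex_eq_iff)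
    with assms show False by simp
  qed
  define w where "w = (1 - \<i> * z) / (1 + \<i> * z)"
  have w0: "w \<noteq> 0" using n1 n2 by (simp add: w_def)
  have im: "Im (Arctan z) = ln (cmod w) / 2"
    by (simp add: Arctan_def w_def[symmetric] Re_Ln[OF w0])
  have cw: "cmod w = cmod (1 - \<i> * z) / cmod (1 + \<i> * z)" by (simp add: w_def norm_divide)
  have s1: "(cmod (1 - \<i> * z))\<^sup>2 = (1 + Im z)\<^sup>2 + (Re z)\<^sup>2"
    unfolding cmod_power2 by (simp add: power2_eq_square)
  have s2: "(cmod (1 + \<i> * z))\<^sup>2 = (1 - Im z)\<^sup>2 + (Re z)\<^sup>2"
    unfolding cmod_power2 by (simp add: power2_eq_square)
  have p1: "cmod (1 + \<i> * z) > 0" using n1 by simp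
  have p2: "cmod (1 - \<i> * z) > 0" using n2 by simp
  have sq: "a < b \<longleftrightarrow> a\<^sup>2 < b\<^sup>2" if "a > 0" "b > 0" for a b :: real
  proof
    assume "a < b" then show "a\<^sup>2 < b\<^sup>2" using that by (intro power_strict_mono) auto
  next
    assume "a\<^sup>2 < b\<^sup>2" then show "a < b" by (rule power_less_imp_less_base) (use that in auto)
  qed
  have A: "cmod w > 1 \<longleftrightarrow> Im z > 0"
  proof -
    have "cmod w > 1 \<longleftrightarrow> cmod (1 - \<i> * z) > cmod (1 + \<i> * z)" using cw p1 by simp
    also have "\<dots> \<longleftrightarrow> (cmod (1 - \<i> * z))\<^sup>2 > (cmod (1 + \<i> * z))\<^sup>2"
      using p1 p2 sq by blast
    also have "\<dots> \<longleftrightarrow> Im z > 0" unfolding s1 s2 by (simp add: power2_eq_square algebra_simps)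
    finally show ?thesis .
  qed
  have B: "cmod w < 1 \<longleftrightarrow> Im z < 0"
  proof -
    have "cmod w < 1 \<longleftrightarrow> cmod (1 - \<i> * z) < cmod (1 + \<i> * z)" using cw p1 by simp
    also have "\<dots> \<longleftrightarrow> (cmod (1 - \<i> * z))\<^sup>2 < (cmod (1 + \<i> * z))\<^sup>2"
      using p1 p2 sq by blast
    also have "\<dots> \<longleftrightarrow> Im z < 0" unfolding s1 s2 by (simp add: power2_eq_square algebra_simps)
    finally show ?thesis .
  qed
  have cpos: "cmod w > 0" using w0 by simp
  show "Im (Arctan z) > 0 \<longleftrightarrow> Im z > 0" using A cpos by (simp add: im)
  show "Im (Arctan z) < 0 \<longleftrightarrow> Im z < 0" using B cpos by (simp add: im)
qed

lemma log_bethe_Im: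
  assumes "log_bethe L N lam I" "k < N" "L > 0"
  shows "real L * Im (Arctan (lam k)) + (\<Sum>l<N. Im (Arctan (lam k - lam l))) = 0"
proof -
  from assms have e: "Arctan (lam k) / complex_of_real pi =
        complex_of_real (I k / real L) - (\<Sum>l<N. Arctan (lam k - lam l)) / complex_of_real (pi * real L)"
    unfolding log_bethe_def by auto
  have "Im (Arctan (lam k) / complex_of_real pi) = Im (complex_of_real (I k / real L) - (\<Sum>l<N. Arctan (lam k - lam l)) / complex_of_real (pi * real L))"
    using e by simp
  then have "Im (Arctan (lam k)) / pi = - (\<Sum>l<N. Im (Arctan (lam k - lam l))) / (pi * real L)"
    by simp
  then show ?thesis using pi_gt_zero assms(3) by (simp add: field_simps)
qed

lemma eq_real:
  assumes lx: "\<forall>l<N. lam l = complex_of_real (x l)" and k: "k < N" and L0: "L > 0"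
  shows "(Arctan (lam k) / complex_of_real pi =
        complex_of_real (I k / real L) - (\<Sum>l<N. Arctan (lam k - lam l)) / complex_of_real (pi * real L))
     \<longleftrightarrow> GG L N x k = pi * I k"
proof -
  have t: "Arctan (lam k - lam l) = complex_of_real (arctan (x k - x l))" if "l \<in> {..<N}" for l
    using that lx k by (simp add: Arctan_of_real flip: of_real_diff)
  have s: "(\<Sum>l<N. Arctan (lam k - lam l)) = complex_of_real (\<Sum>l<N. arctan (x k - x l))"
    using t by (simp add: of_real_sum)
  have a: "Arctan (lam k) = complex_of_real (arctan (x k))" using lx k by (simp add: Arctan_of_real)
  have "(Arctan (lam k) / complex_of_real pi =
        complex_of_real (I k / real L) - (\<Sum>l<N. Arctan (lam k - lam l)) / complex_of_real (pi * real L))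
     \<longleftrightarrow> complex_of_real (arctan (x k) / pi) = complex_of_real (I k / real L - (\<Sum>l<N. arctan (x k - x l)) / (pi * real L))"
    unfolding a s by simp
  also have "\<dots> \<longleftrightarrow> arctan (x k) / pi = I k / real L - (\<Sum>l<N. arctan (x k - x l)) / (pi * real L)"
    by (rule of_real_eq_iff)
  also have "\<dots> \<longleftrightarrow> GG L N x k = pi * I k"
    using L0 pi_gt_zero by (simp add: GG_def field_simps)
  finally show ?thesis .
qed

lemma sol_real:
  assumes L0: "L > 0" and adm: "arctan_admissible N lam" and lb: "log_bethe L N lam I"
  shows "\<forall>k<N. Im (lam k) = 0"
proof -
  have key: "real L * Im (Arctan (lam k)) + (\<Sum>l<N. Im (Arctan (lam k - lam l))) = 0" if "k < N" for k
    using log_bethe_Im[OF lb that L0] .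
  have ad: "lam k \<noteq> \<i> \<and> lam k \<noteq> - \<i> \<and> lam k - lam l \<noteq> \<i> \<and> lam k - lam l \<noteq> - \<i>" if "k < N" "l < N" for k l
    using adm that unfolding arctan_admissible_def by blast
  have up: "\<forall>k<N. Im (lam k) \<le> 0"
  proof (rule ccontr)
    assume "\<not> (\<forall>k<N. Im (lam k) \<le> 0)"
    then obtain k0 where k0: "k0 < N" "Im (lam k0) > 0" by auto
    define m where "m = Max ((\<lambda>k. Im (lam k)) ` {..<N})"
    have "m \<in> (\<lambda>k. Im (lam k)) ` {..<N}" unfolding m_def by (rule Max_in) (use k0 in auto)
    then obtain k where k: "k < N" "Im (lam k) = m" by auto
    have mge: "Im (lam l) \<le> m" if "l < N" for l unfolding m_def by (rule Max_ge) (use that in auto)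
    have "Im (lam k) > 0" using mge[OF k0(1)] k0 k by simp
    then have p: "Im (Arctan (lam k)) > 0" using Im_Arctan_sign(1)[of "lam k"] ad[OF k(1) k(1)] by blast
    have "Im (Arctan (lam k - lam l)) \<ge> 0" if "l \<in> {..<N}" for l
    proof -
      have "Im (lam k - lam l) \<ge> 0" using mge[of l] that k by simp
      moreover have "lam k - lam l \<noteq> \<i>" "lam k - lam l \<noteq> - \<i>" using ad[OF k(1), of l] that by auto
      ultimately show ?thesis using Im_Arctan_sign(2)[of "lam k - lam l"] by linarith
    qed
    then have "(\<Sum>l<N. Im (Arctan (lam k - lam l))) \<ge> 0" by (rule sum_nonneg)
    moreover have "real L * Im (Arctan (lam k)) > 0" using p L0 by simp
    ultimately show False using key[OF k(1)] by linarith
  qed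
  have lo: "\<forall>k<N. Im (lam k) \<ge> 0"
  proof (rule ccontr)
    assume "\<not> (\<forall>k<N. Im (lam k) \<ge> 0)"
    then obtain k0 where k0: "k0 < N" "Im (lam k0) < 0" by auto
    define m where "m = Min ((\<lambda>k. Im (lam k)) ` {..<N})"
    have "m \<in> (\<lambda>k. Im (lam k)) ` {..<N}" unfolding m_def by (rule Min_in) (use k0 in auto)
    then obtain k where k: "k < N" "Im (lam k) = m" by auto
    have mle: "m \<le> Im (lam l)" if "l < N" for l unfolding m_def by (rule Min_le) (use that in auto)
    have "Im (lam k) < 0" using mle[OF k0(1)] k0 k by simp
    then have p: "Im (Arctan (lam k)) < 0" using Im_Arctan_sign(2)[of "lam k"] ad[OF k(1) k(1)] by blast
    have "Im (Arctan (lam k - lam l)) \<le> 0" if "l \<in> {..<N}" for l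
    proof -
      have "Im (lam k - lam l) \<le> 0" using mle[of l] that k by simp
      moreover have "lam k - lam l \<noteq> \<i>" "lam k - lam l \<noteq> - \<i>" using ad[OF k(1), of l] that by auto
      ultimately show ?thesis using Im_Arctan_sign(1)[of "lam k - lam l"] by linarith
    qed
    then have "(\<Sum>l<N. Im (Arctan (lam k - lam l))) \<le> 0" by (rule sum_nonpos)
    moreover have "real L * Im (Arctan (lam k)) < 0" using p L0 by (simp add: mult_pos_neg)
    ultimately show False using key[OF k(1)] by linarith
  qed
  show ?thesis using up lo by force
qed

lemma card_above:
  fixes I :: "nat \<Rightarrow> real" and Bd :: real
  assumes inj: "inj_on I {..<N}" and intd: "\<forall>k<N. \<forall>l<N. I k - I l \<in> \<int>" and k: "k < N"
    and bI: "Bd - I k \<in> \<int>" and lt: "\<forall>l<N. I l < Bd"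
  shows "real (card {l\<in>{..<N}. I l > I k}) \<le> Bd - I k - 1"
proof -
  define T where "T = {l\<in>{..<N}. I l > I k}"
  define m where "m = \<lfloor>Bd - I k\<rfloor>"
  from bI obtain n where n: "Bd - I k = of_int n" by (auto elim: Ints_cases)
  have mB: "of_int m = Bd - I k" by (simp add: m_def n)
  define f where "f l = \<lfloor>I l - I k\<rfloor>" for l
  have fl: "of_int (f l) = I l - I k" if "l \<in> T" for l
  proof -
    have "I l - I k \<in> \<int>" using intd that k unfolding T_def by auto
    then obtain n where n: "I l - I k = of_int n" by (auto elim: Ints_cases)
    show ?thesis by (simp add: f_def n)
  qed
  have injf: "inj_on f T"
  proof (rule inj_onI)
    fix a b assume ab: "a \<in> T" "b \<in> T" "f a = f b"
    then have "I a = I b" using fl[of a] fl[of b] by simp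
    moreover have "a \<in> {..<N}" "b \<in> {..<N}" using ab unfolding T_def by auto
    ultimately show "a = b" using inj by (auto dest: inj_onD)
  qed
  have sub: "f ` T \<subseteq> {1..m-1}"
  proof
    fix v assume "v \<in> f ` T"
    then obtain l where l: "l \<in> T" "v = f l" by auto
    have "of_int v > (0::real)" using fl[OF l(1)] l unfolding T_def by simp
    then have v1: "v \<ge> 1" by simp
    have "of_int v < (of_int m :: real)" using fl[OF l(1)] l mB lt unfolding T_def by simp
    then have "v < m" by linarith
    then show "v \<in> {1..m-1}" using v1 by simp
  qed
  have "card (f ` T) \<le> card {1..m-1}" by (rule card_mono[OF _ sub]) simp
  then have c1: "card T \<le> nat (m - 1)" using card_image[OF injf] by simp
  have m1: "m \<ge> 1"
  proof -
    have "(of_int m :: real) > 0" using mB lt k by simp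
    then show ?thesis by simp
  qed
  have "int (card T) \<le> m - 1" using c1 m1 by linarith
  then have "real (card T) \<le> of_int (m - 1)"
    by (metis of_int_le_iff of_int_of_nat_eq)
  then show ?thesis using mB unfolding T_def by simp
qed

lemma card_split:
  fixes I :: "nat \<Rightarrow> real"
  assumes inj: "inj_on I {..<N}" and k: "k < N"
  shows "card {l\<in>{..<N}. I l < I k} + card {l\<in>{..<N}. I l > I k} = N - 1"
proof -
  have u: "{..<N} - {k} = {l\<in>{..<N}. I l < I k} \<union> {l\<in>{..<N}. I l > I k}"
  proof
    show "{..<N} - {k} \<subseteq> {l\<in>{..<N}. I l < I k} \<union> {l\<in>{..<N}. I l > I k}"
    proof
      fix l assume l: "l \<in> {..<N} - {k}"
      then have "I l \<noteq> I k" using inj k by (auto dest: inj_onD)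
      then show "l \<in> {l\<in>{..<N}. I l < I k} \<union> {l\<in>{..<N}. I l > I k}" using l by (auto simp: neq_iff)
    qed
  qed auto
  have "card ({..<N} - {k}) = card {l\<in>{..<N}. I l < I k} + card {l\<in>{..<N}. I l > I k}"
    unfolding u by (rule card_Un_disjoint) auto
  then show ?thesis using k by simp
qed

lemma G_super:
  fixes I :: "nat \<Rightarrow> real"
  assumes L0: "L > 0" and N1: "N \<ge> 1" and inj: "inj_on I {..<N}" and intd: "\<forall>k<N. \<forall>l<N. I k - I l \<in> \<int>"
   and lowb: "\<forall>k<N. I k + real L + real N \<ge> 1"
   and comb: "\<forall>k<N. I k \<le> (real L + real (card {l\<in>{..<N}. I l < I k}) - real (card {l\<in>{..<N}. I l > I k}))/2 - 1"
  shows "\<exists>M>0. \<forall>k<N. pi * I k \<le> GG L N (\<lambda>k. M * (I k + real L + real N)) k"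
proof -
  define e where "e = pi / (2 * (real L + real N))"
  have L1: "real L \<ge> 1" using L0 by simp
  have LN: "real L + real N \<ge> 2" using L1 N1 by simp
  have e0: "e > 0" using LN by (simp add: e_def)
  have eq: "e * (2 * (real L + real N)) = pi" using LN by (simp add: e_def)
  have "e * 4 \<le> e * (2 * (real L + real N))" using e0 LN by (intro mult_left_mono) auto
  then have e1: "e * 4 \<le> pi" using eq by simp
  have LNe: "(real L + real N) * e = pi / 2" using eq by (simp add: algebra_simps)
  define M where "M = tan (pi/2 - e)"
  have M0: "M > 0" unfolding M_def using e0 e1 pi_gt_zero by (intro tan_gt_zero) auto
  have aM: "arctan M = pi/2 - e" unfolding M_def using e0 e1 pi_gt_zero by (intro arctan_tan) auto
  show ?thesis
  proof (intro exI[of _ M] conjI allI impI)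
    show "M > 0" by (rule M0)
    fix k assume k: "k < N"
    define lp where "lp = (\<lambda>k. M * (I k + real L + real N))"
    define a where "a = card {l\<in>{..<N}. I l < I k}"
    define b where "b = card {l\<in>{..<N}. I l > I k}"
    have "M * 1 \<le> M * (I k + real L + real N)" using M0 lowb k by (intro mult_left_mono) auto
    then have "arctan M \<le> arctan (lp k)" by (simp add: lp_def arctan_le_iff)
    then have t1: "pi/2 - e \<le> arctan (lp k)" using aM by simp
    define f where "f l = (pi/2 - e) * of_bool (I l < I k) - (pi/2) * of_bool (I k < I l)" for l
    have t2: "f l \<le> arctan (lp k - lp l)" if l: "l \<in> {..<N}" for l
    proof -
      have df: "lp k - lp l = M * (I k - I l)" by (simp add: lp_def algebra_simps)
      consider "I l < I k" | "I k < I l" | "I l = I k" by linarith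
      then show ?thesis
      proof cases
        case 1
        have "I k - I l \<in> \<int>" using intd k l by auto
        then obtain n where n: "I k - I l = of_int n" by (auto elim: Ints_cases)
        then have "n \<ge> 1" using 1 by simp
        then have "I k - I l \<ge> 1" using n by simp
        then have "M * 1 \<le> M * (I k - I l)" using M0 by (intro mult_left_mono) auto
        then have "arctan M \<le> arctan (lp k - lp l)" using df by (simp add: arctan_le_iff)
        then show ?thesis using 1 aM by (simp add: f_def)
      next
        case 2
        then show ?thesis using arctan_lbound[of "lp k - lp l"] by (simp add: f_def)
      next
        case 3
        then have "l = k" using inj k l by (auto dest: inj_onD)
        then show ?thesis by (simp add: f_def)
      qed
    qed
    have s1: "{..<N} \<inter> {l. I l < I k} = {l\<in>{..<N}. I l < I k}" by auto
    have s2: "{..<N} \<inter> {l. I k < I l} = {l\<in>{..<N}. I l > I k}" by auto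
    have "(\<Sum>l<N. f l) = (\<Sum>l<N. (pi/2 - e) * of_bool (I l < I k)) - (\<Sum>l<N. (pi/2) * of_bool (I k < I l))"
      by (simp only: f_def sum_subtractf)
    also have "\<dots> = (pi/2 - e) * (\<Sum>l<N. of_bool (I l < I k)) - (pi/2) * (\<Sum>l<N. of_bool (I k < I l))"
      by (simp only: sum_distrib_left)
    also have "\<dots> = (pi/2 - e) * real a - (pi/2) * real b"
    proof -
      have "(\<Sum>l<N. (of_bool (I l < I k)::real)) = real (card ({..<N} \<inter> {l. I l < I k}))" by simp
      moreover have "(\<Sum>l<N. (of_bool (I k < I l)::real)) = real (card ({..<N} \<inter> {l. I k < I l}))" by simp
      ultimately show ?thesis unfolding s1 s2 a_def b_def by simp
    qed
    finally have sf: "(\<Sum>l<N. f l) = (pi/2 - e) * real a - (pi/2) * real b" .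
    have "(\<Sum>l<N. f l) \<le> (\<Sum>l<N. arctan (lp k - lp l))" by (rule sum_mono) (rule t2)
    then have sa: "(pi/2 - e) * real a - (pi/2) * real b \<le> (\<Sum>l<N. arctan (lp k - lp l))" using sf by simp
    have "{l\<in>{..<N}. I l < I k} \<subseteq> {..<N}" by auto
    then have "card {l\<in>{..<N}. I l < I k} \<le> card {..<N::nat}" by (intro card_mono) auto
    then have aN: "a \<le> N" unfolding a_def by simp
    have "(real L + real a) * e \<le> (real L + real N) * e" using aN e0 by (intro mult_right_mono) auto
    then have ae: "(real L + real a) * e \<le> pi / 2" using LNe by simp
    have "real L * (pi/2 - e) \<le> real L * arctan (lp k)" using t1 by (intro mult_left_mono) auto
    then have G1: "real L * (pi/2 - e) + ((pi/2 - e) * real a - (pi/2) * real b) \<le> GG L N lp k"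
      using sa by (simp add: GG_def)
    have id1: "real L * (pi/2 - e) + ((pi/2 - e) * real a - (pi/2) * real b)
        = pi/2 * (real L + real a - real b) - (real L + real a) * e"
      by (simp add: algebra_simps add_divide_distrib diff_divide_distrib)
    have "pi * I k \<le> pi * ((real L + real a - real b)/2 - 1)"
      using comb k pi_gt_zero unfolding a_def b_def by (intro mult_left_mono) auto
    also have "\<dots> = pi/2 * (real L + real a - real b) - pi"
      by (simp add: algebra_simps add_divide_distrib diff_divide_distrib)
    finally have "pi * I k \<le> pi/2 * (real L + real a - real b) - pi" .
    then show "pi * I k \<le> GG L N (\<lambda>k. M * (I k + real L + real N)) k"
      using G1 id1 ae pi_gt_zero unfolding lp_def by linarith
  qed
qed

lemma bethe_diff: "bethe_number_ok N x \<Longrightarrow> bethe_number_ok N y \<Longrightarrow> x - y \<in> \<int>"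
proof (cases "odd N")
  case True
  assume "bethe_number_ok N x" "bethe_number_ok N y"
  then show ?thesis using True by (simp add: bethe_number_ok_def Ints_diff)
next
  case False
  assume "bethe_number_ok N x" "bethe_number_ok N y"
  then have "x - 1/2 \<in> \<int>" "y - 1/2 \<in> \<int>" using False by (simp_all add: bethe_number_ok_def)
  then have "(x - 1/2) - (y - 1/2) \<in> \<int>" by (rule Ints_diff)
  then show ?thesis by simp
qed

lemma bethe_B:
  assumes "even L" "bethe_number_ok N x"
  shows "(real L + real N - 1)/2 - x \<in> \<int> \<and> (real L + real N - 1)/2 + x \<in> \<int>"
proof -
  obtain p where p: "L = 2 * p" using assms(1) by (auto elim: evenE)
  show ?thesis
  proof (cases "odd N")
    case True
    then obtain q where q: "N = 2 * q + 1" by (auto elim: oddE)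
    have xi: "x \<in> \<int>" using True assms(2) by (simp add: bethe_number_ok_def)
    have B: "(real L + real N - 1)/2 = of_nat (p + q)" using p q by simp
    show ?thesis unfolding B using xi by (simp add: Ints_diff Ints_add)
  next
    case False
    then obtain q where q: "N = 2 * q" by (auto elim: evenE)
    have xi: "x - 1/2 \<in> \<int>" using False assms(2) by (simp add: bethe_number_ok_def)
    have B1: "(real L + real N - 1)/2 - x = of_int (int p + int q - 1) - (x - 1/2)" using p q by (simp add: field_simps)
    have B2: "(real L + real N - 1)/2 + x = of_nat (p + q) + (x - 1/2)" using p q by (simp add: field_simps)
    have c1: "(of_int (int p + int q - 1)::real) - (x - 1/2) \<in> \<int>" by (rule Ints_diff[OF Ints_of_int xi])
    have c2: "(of_nat (p + q)::real) + (x - 1/2) \<in> \<int>" by (rule Ints_add[OF Ints_of_nat xi])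
    show ?thesis unfolding B1 B2 using c1 c2 by blast
  qed
qed

lemma lin_aux:
  fixes a b j n l :: real
  assumes "a + b = n - 1" "b \<le> (l + n - 1) / 2 - j - 1"
  shows "j \<le> (l + a - b) / 2 - 1"
  using assms by argo

lemma comb_gen:
  fixes J :: "nat \<Rightarrow> real"
  assumes inj: "inj_on J {..<N}" and intd: "\<forall>k<N. \<forall>l<N. J k - J l \<in> \<int>" and k: "k < N"
    and bI: "(real L + real N - 1)/2 - J k \<in> \<int>" and lt: "\<forall>l<N. J l < (real L + real N - 1)/2"
  shows "J k \<le> (real L + real (card {l\<in>{..<N}. J l < J k}) - real (card {l\<in>{..<N}. J l > J k}))/2 - 1"
proof -
  have cb: "real (card {l\<in>{..<N}. J l > J k}) \<le> (real L + real N - 1)/2 - J k - 1"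
    by (rule card_above[OF inj intd k bI lt])
  have cs: "card {l\<in>{..<N}. J l < J k} + card {l\<in>{..<N}. J l > J k} = N - 1"
    by (rule card_split[OF inj k])
  have "real (card {l\<in>{..<N}. J l < J k}) + real (card {l\<in>{..<N}. J l > J k}) = real N - 1"
  proof -
    have "real (card {l\<in>{..<N}. J l < J k} + card {l\<in>{..<N}. J l > J k}) = real (N - 1)" using cs by simp
    moreover have "real (N - 1) = real N - 1" using k by (simp add: of_nat_diff)
    ultimately show ?thesis by simp
  qed
  then show ?thesis using lin_aux cb by blast
qed

theorem proposition1:
  fixes L N :: nat
  assumes "even L" and "L > 0" and "N \<ge> 1"
  shows "(\<forall>lam I. inj_on lam {..<N} \<and> arctan_admissible N lam
            \<and> (\<forall>k<N. bethe_number_ok N (I k)) \<and> log_bethe L N lam I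
          \<longrightarrow> (\<forall>k<N. lam k \<in> \<real>) \<and> inj_on I {..<N}
              \<and> (\<forall>k<N. \<bar>I k\<bar> < (real L + real N - 1) / 2))
       \<and> (\<forall>I. inj_on I {..<N}
            \<and> (\<forall>k<N. bethe_number_ok N (I k) \<and> \<bar>I k\<bar> < (real L + real N - 1) / 2)
          \<longrightarrow> (\<exists>!lam. (\<forall>k\<ge>N. lam k = 0) \<and> inj_on lam {..<N}
                   \<and> arctan_admissible N lam \<and> log_bethe L N lam I))"
proof -
  have L0: "L > 0" using assms by simp
  have part1: "\<forall>lam I. inj_on lam {..<N} \<and> arctan_admissible N lam
            \<and> (\<forall>k<N. bethe_number_ok N (I k)) \<and> log_bethe L N lam I
          \<longrightarrow> (\<forall>k<N. lam k \<in> \<real>) \<and> inj_on I {..<N}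
              \<and> (\<forall>k<N. \<bar>I k\<bar> < (real L + real N - 1) / 2)"
  proof (intro allI impI)
    fix lam and I :: "nat \<Rightarrow> real"
    assume H: "inj_on lam {..<N} \<and> arctan_admissible N lam
            \<and> (\<forall>k<N. bethe_number_ok N (I k)) \<and> log_bethe L N lam I"
    have re: "\<forall>k<N. Im (lam k) = 0" using sol_real[OF L0] H by blast
    define x where "x = (\<lambda>k. Re (lam k))"
    have lx: "\<forall>l<N. lam l = complex_of_real (x l)" using re by (simp add: x_def complex_eq_iff)
    have G: "GG L N x k = pi * I k" if "k < N" for k
      using eq_real[OF lx that L0, of I] H that unfolding log_bethe_def by blast
    have r: "\<forall>k<N. lam k \<in> \<real>" using re by (simp add: complex_is_Real_iff)
    have i: "inj_on I {..<N}"
    proof (rule inj_onI)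
      fix k j assume kj: "k \<in> {..<N}" "j \<in> {..<N}" "I k = I j"
      have "x k = x j"
      proof (rule ccontr)
        assume "x k \<noteq> x j"
        then consider "x k < x j" | "x j < x k" by linarith
        then show False
        proof cases
          case 1 then have "GG L N x k < GG L N x j" by (rule G_strict[OF L0])
          then show False using G kj by simp
        next
          case 2 then have "GG L N x j < GG L N x k" by (rule G_strict[OF L0])
          then show False using G kj by simp
        qed
      qed
      then have "lam k = lam j" using lx kj by simp
      then show "k = j" using H kj by (auto dest: inj_onD)
    qed
    have b: "\<forall>k<N. \<bar>I k\<bar> < (real L + real N - 1) / 2"
    proof (intro allI impI)
      fix k assume k: "k < N"
      have g1: "\<bar>GG L N x k\<bar> \<le> real L * \<bar>arctan (x k)\<bar> + (real N - 1) * (pi / 2)"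
        by (rule G_bound[OF k])
      have "\<bar>arctan (x k)\<bar> < pi / 2"
        using arctan_lbound[of "x k"] arctan_ubound[of "x k"] unfolding abs_less_iff by linarith
      then have g2: "real L * \<bar>arctan (x k)\<bar> < real L * (pi / 2)" using L0 by simp
      have g3: "real L * (pi / 2) + (real N - 1) * (pi / 2) = pi * ((real L + real N - 1) / 2)"
        by (simp add: algebra_simps add_divide_distrib diff_divide_distrib)
      have "\<bar>pi * I k\<bar> < pi * ((real L + real N - 1) / 2)" using g1 g2 g3 G[OF k] by linarith
      then have "pi * \<bar>I k\<bar> < pi * ((real L + real N - 1) / 2)" by (simp add: abs_mult)
      then show "\<bar>I k\<bar> < (real L + real N - 1) / 2" using pi_gt_zero by simp
    qed
    show "(\<forall>k<N. lam k \<in> \<real>) \<and> inj_on I {..<N} \<and> (\<forall>k<N. \<bar>I k\<bar> < (real L + real N - 1) / 2)"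
      using r i b by blast
  qed
  have part2: "\<forall>I. inj_on I {..<N}
            \<and> (\<forall>k<N. bethe_number_ok N (I k) \<and> \<bar>I k\<bar> < (real L + real N - 1) / 2)
          \<longrightarrow> (\<exists>!lam. (\<forall>k\<ge>N. lam k = 0) \<and> inj_on lam {..<N}
                   \<and> arctan_admissible N lam \<and> log_bethe L N lam I)"
  proof (intro allI impI)
    fix I :: "nat \<Rightarrow> real"
    assume H: "inj_on I {..<N} \<and> (\<forall>k<N. bethe_number_ok N (I k) \<and> \<bar>I k\<bar> < (real L + real N - 1) / 2)"
    have inj: "inj_on I {..<N}" using H by blast
    have bn: "\<And>k. k < N \<Longrightarrow> bethe_number_ok N (I k)" using H by blast
    have bd: "\<And>k. k < N \<Longrightarrow> \<bar>I k\<bar> < (real L + real N - 1) / 2" using H by blast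
    have intd: "\<forall>k<N. \<forall>l<N. I k - I l \<in> \<int>"
    proof (intro allI impI)
      fix k l assume "k < N" "l < N"
      then show "I k - I l \<in> \<int>" using bethe_diff[OF bn bn] by blast
    qed
    have intd': "\<forall>k<N. \<forall>l<N. (- I k) - (- I l) \<in> \<int>"
    proof (intro allI impI)
      fix k l assume "k < N" "l < N"
      then have "- (I k - I l) \<in> \<int>" using intd by (intro Ints_minus) auto
      then show "(- I k) - (- I l) \<in> \<int>" by simp
    qed
    have inj': "inj_on (\<lambda>k. - I k) {..<N}" using inj by (auto simp: inj_on_def)
    have bI: "(real L + real N - 1)/2 - I k \<in> \<int>" "(real L + real N - 1)/2 - (- I k) \<in> \<int>" if "k < N" for k
    proof -
      have "(real L + real N - 1)/2 - I k \<in> \<int> \<and> (real L + real N - 1)/2 + I k \<in> \<int>"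
        by (rule bethe_B[OF assms(1) bn[OF that]])
      then show "(real L + real N - 1)/2 - I k \<in> \<int>" "(real L + real N - 1)/2 - (- I k) \<in> \<int>" by simp_all
    qed
    have lt1: "\<forall>l<N. I l < (real L + real N - 1)/2"
    proof (intro allI impI)
      fix l assume "l < N" then show "I l < (real L + real N - 1)/2" using bd[of l] unfolding abs_less_iff by linarith
    qed
    have lt2: "\<forall>l<N. - I l < (real L + real N - 1)/2"
    proof (intro allI impI)
      fix l assume "l < N" then show "- I l < (real L + real N - 1)/2" using bd[of l] unfolding abs_less_iff by linarith
    qed
    have comb1: "\<forall>k<N. I k \<le> (real L + real (card {l\<in>{..<N}. I l < I k}) - real (card {l\<in>{..<N}. I l > I k}))/2 - 1"
      using comb_gen[OF inj intd _ bI(1) lt1] by blast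
    have comb2: "\<forall>k<N. - I k \<le> (real L + real (card {l\<in>{..<N}. - I l < - I k}) - real (card {l\<in>{..<N}. - I l > - I k}))/2 - 1"
      using comb_gen[OF inj' intd' _ bI(2) lt2] by blast
    have lowb1: "\<forall>k<N. I k + real L + real N \<ge> 1" using lt2 by auto
    have lowb2: "\<forall>k<N. - I k + real L + real N \<ge> 1" using lt1 by auto
    obtain M1 where M1: "M1 > 0" "\<forall>k<N. pi * I k \<le> GG L N (\<lambda>k. M1 * (I k + real L + real N)) k"
      using G_super[OF L0 assms(3) inj intd lowb1 comb1] by blast
    obtain M2 where M2: "M2 > 0" "\<forall>k<N. pi * (- I k) \<le> GG L N (\<lambda>k. M2 * (- I k + real L + real N)) k"
      using G_super[OF L0 assms(3) inj' intd' lowb2 comb2] by blast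
    define lp where "lp = (\<lambda>k. M1 * (I k + real L + real N))"
    define lm where "lm = (\<lambda>k. - (M2 * (- I k + real L + real N)))"
    have lmlp: "\<forall>k<N. lm k \<le> lp k"
    proof (intro allI impI)
      fix k assume k: "k < N"
      have "0 \<le> M1 * (I k + real L + real N)"
        using M1(1) lowb1 k by (intro mult_nonneg_nonneg) auto
      moreover have "0 \<le> M2 * (- I k + real L + real N)"
        using M2(1) lowb2 k by (intro mult_nonneg_nonneg) auto
      ultimately show "lm k \<le> lp k" by (simp add: lm_def lp_def)
    qed
    have sub: "\<forall>k<N. GG L N lm k \<le> pi * I k"
    proof (intro allI impI)
      fix k assume k: "k < N"
      have "GG L N lm k = - GG L N (\<lambda>k. M2 * (- I k + real L + real N)) k"
        unfolding lm_def by (rule G_neg)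
      moreover from M2(2) k have "pi * (- I k) \<le> GG L N (\<lambda>k. M2 * (- I k + real L + real N)) k" by blast
      moreover have "pi * (- I k) = - (pi * I k)" by simp
      ultimately show "GG L N lm k \<le> pi * I k" by linarith
    qed
    have sup: "\<forall>k<N. pi * I k \<le> GG L N lp k" using M1 by (simp add: lp_def)
    obtain x where x0: "\<forall>k\<ge>N. x k = 0" and xG: "\<forall>k<N. GG L N x k = pi * I k"
      using G_exists[OF L0 lmlp sub sup] by blast
    define lam where "lam = (\<lambda>k. complex_of_real (x k))"
    have lx: "\<forall>l<N. lam l = complex_of_real (x l)" by (simp add: lam_def)
    have xinj: "inj_on x {..<N}"
    proof (rule inj_onI)
      fix k j assume kj: "k \<in> {..<N}" "j \<in> {..<N}" "x k = x j"
      then have "GG L N x k = GG L N x j" by (simp add: GG_def)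
      then have "I k = I j" using xG kj by simp
      then show "k = j" using inj kj by (auto dest: inj_onD)
    qed
    show "\<exists>!lam. (\<forall>k\<ge>N. lam k = 0) \<and> inj_on lam {..<N} \<and> arctan_admissible N lam \<and> log_bethe L N lam I"
    proof (rule ex1I[of _ lam])
      have z: "\<forall>k\<ge>N. lam k = 0" using x0 by (simp add: lam_def)
      have ij: "inj_on lam {..<N}" using xinj by (auto simp: inj_on_def lam_def)
      have ad: "arctan_admissible N lam"
        unfolding arctan_admissible_def lam_def by (simp add: complex_eq_iff)
      have lb: "log_bethe L N lam I"
        unfolding log_bethe_def using eq_real[OF lx _ L0] xG by blast
      show "(\<forall>k\<ge>N. lam k = 0) \<and> inj_on lam {..<N} \<and> arctan_admissible N lam \<and> log_bethe L N lam I"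
        using z ij ad lb by blast
    next
      fix lam' assume H': "(\<forall>k\<ge>N. lam' k = (0::complex)) \<and> inj_on lam' {..<N} \<and> arctan_admissible N lam' \<and> log_bethe L N lam' I"
      have re: "\<forall>k<N. Im (lam' k) = 0" using sol_real[OF L0] H' by blast
      define x' where "x' = (\<lambda>k. Re (lam' k))"
      have lx': "\<forall>l<N. lam' l = complex_of_real (x' l)" using re by (simp add: x'_def complex_eq_iff)
      have G': "\<forall>k<N. GG L N x' k = pi * I k"
        using eq_real[OF lx' _ L0, of _ I] H' unfolding log_bethe_def by blast
      have e1: "\<forall>k<N. x' k \<le> x k" using G_uniq_le[OF L0, of N x' x] G' xG by simp
      have e2: "\<forall>k<N. x k \<le> x' k" using G_uniq_le[OF L0, of N x x'] G' xG by simp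
      show "lam' = lam"
      proof
        fix k show "lam' k = lam k"
        proof (cases "k < N")
          case True
          then have "x' k = x k" using e1 e2 by (simp add: antisym)
          then show ?thesis using lx' True by (simp add: lam_def)
        next
          case False
          then show ?thesis using H' x0 by (simp add: lam_def)
        qed
      qed
    qed
  qed
  show ?thesis using part1 part2 by blast
qed

end
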